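(* Let $k$ be a field, $V$ a $k$-vector space, $\varphi\in\operatorname{End}_k(V)$ a finite potent endomorphism with index $i(\varphi)=r$ and AST-decomposition $V=W_\varphi\oplus U_\varphi$. If $\psi\in\operatorname{End}_k(V)$ is a G-Drazin inverse of $\varphi$, then $W_\varphi$ and $U_\varphi$ are invariant under $\psi$.
   Context: An endomorphism $\varphi$ of a $k$-vector space $V$ is finite potent if $\varphi^n(V)$ is finite dimensional for some $n$. For such $\varphi$, the AST-decomposition is $V=U_\varphi\oplus W_\varphi$ where $U_\varphi=\{v\in V: \varphi^m(v)=0 \text{ for some } m\}$ and $W_\varphi=\{v\in V: p(\varphi)(v)=0 \text{ for some } p(x)\in k[x] \text{ coprime to } x\}$; both are $\varphi$-invariant, $\varphi|_{U_\varphi}$ is nilpotent, $W_\varphi$ is finite dimensional and $\varphi|_{W_\varphi}$ is an automorphism. The index $i(\varphi)$ is the nilpotency order of $\varphi|_{U_\varphi}$. An endomorphism $\psi\in\operatorname{End}_k(V)$ is a G-Drazin inverse of $\varphi$ if $\varphi\circ\psi\circ\varphi=\varphi$ and $\psi\circ\varphi^{r}=\varphi^{r}\circ\psi$, where $r=i(\varphi)$. *)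

theory Defs
  imports Main "HOL-Computational_Algebra.Polynomial"
begin

text \<open>Vector spaces are modelled by the library locale vector_space with a
scalar multiplication scale :: 'k \<Rightarrow> 'v \<Rightarrow> 'v over a field 'k;
the whole type 'v is the space V; endomorphisms are linear maps 'v \<Rightarrow> 'v.\<close>

definition poly_endo :: "('k::field \<Rightarrow> 'v::ab_group_add \<Rightarrow> 'v) \<Rightarrow> 'k poly \<Rightarrow> ('v \<Rightarrow> 'v) \<Rightarrow> 'v \<Rightarrow> 'v" where
  "poly_endo scale p phi v = (\<Sum>i\<le>degree p. scale (coeff p i) ((phi ^^ i) v))"

definition finite_potent :: "('k::field \<Rightarrow> 'v::ab_group_add \<Rightarrow> 'v) \<Rightarrow> ('v \<Rightarrow> 'v) \<Rightarrow> bool" where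
  "finite_potent scale phi \<longleftrightarrow>
     Vector_Spaces.linear scale scale phi \<and>
     (\<exists>n. \<exists>B. finite B \<and> module.span scale B = range (phi ^^ n))"

definition U_part :: "('v::zero \<Rightarrow> 'v) \<Rightarrow> 'v set" where
  "U_part phi = {v. \<exists>m. (phi ^^ m) v = 0}"

definition W_part :: "('k::field \<Rightarrow> 'v::ab_group_add \<Rightarrow> 'v) \<Rightarrow> ('v \<Rightarrow> 'v) \<Rightarrow> 'v set" where
  "W_part scale phi = {v. \<exists>p::'k poly. coprime p [:0, 1:] \<and> poly_endo scale p phi v = 0}"

definition fp_index :: "('v::zero \<Rightarrow> 'v) \<Rightarrow> nat" where
  "fp_index phi = (LEAST m. \<forall>u \<in> U_part phi. (phi ^^ m) u = 0)"

definition G_Drazin_inverse :: "('k::field \<Rightarrow> 'v::ab_group_add \<Rightarrow> 'v) \<Rightarrow> ('v \<Rightarrow> 'v) \<Rightarrow> ('v \<Rightarrow> 'v) \<Rightarrow> bool" where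
  "G_Drazin_inverse scale phi psi \<longleftrightarrow>
     Vector_Spaces.linear scale scale psi \<and>
     phi \<circ> psi \<circ> phi = phi \<and>
     psi \<circ> (phi ^^ fp_index phi) = (phi ^^ fp_index phi) \<circ> psi"

end

theory Submission
  imports Defs "HOL-Computational_Algebra.Polynomial_Factorial"
begin

context vector_space
begin

lemma pe_bound:
  assumes "degree p \<le> N"
  shows "poly_endo scale p phi v = (\<Sum>i\<le>N. scale (coeff p i) ((phi ^^ i) v))"
  unfolding poly_endo_def
  by (rule sum.mono_neutral_left) (use assms in \<open>auto intro: coeff_eq_0 simp: not_le\<close>)

lemma pe_0[simp]: "poly_endo scale 0 phi v = 0"
  by (simp add: poly_endo_def)

lemma pe_add: "poly_endo scale (p + q) phi v = poly_endo scale p phi v + poly_endo scale q phi v"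
proof -
  let ?N = "max (degree p) (degree q)"
  have "degree (p + q) \<le> ?N" by (rule degree_add_le) auto
  then show ?thesis
    by (simp add: pe_bound[of _ ?N] scale_left_distrib sum.distrib)
qed

lemma pe_diff: "poly_endo scale (p - q) phi v = poly_endo scale p phi v - poly_endo scale q phi v"
proof -
  let ?N = "max (degree p) (degree q)"
  have "degree (p - q) \<le> ?N" by (rule degree_diff_le) auto
  then show ?thesis
    by (simp add: pe_bound[of _ ?N] scale_left_diff_distrib sum_subtractf)
qed

lemma pe_smult: "poly_endo scale (smult c p) phi v = scale c (poly_endo scale p phi v)"
  by (simp add: pe_bound[of "smult c p" "degree p"] pe_bound[of p "degree p"] scale_sum_right)

lemma pe_sum: "finite A \<Longrightarrow> poly_endo scale (sum g A) phi v = (\<Sum>a\<in>A. poly_endo scale (g a) phi v)"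
  by (induction A rule: finite_induct) (auto simp: pe_add)

lemma pe_pCons:
  assumes lin: "Vector_Spaces.linear scale scale phi"
  shows "poly_endo scale (pCons a p) phi v = scale a v + phi (poly_endo scale p phi v)"
proof -
  have mh: "module_hom scale scale phi" using lin by (rule module_hom_linearI)
  have "poly_endo scale (pCons a p) phi v = (\<Sum>i\<le>Suc (degree p). scale (coeff (pCons a p) i) ((phi ^^ i) v))"
    by (rule pe_bound) (simp add: degree_pCons_le)
  also have "\<dots> = scale a v + (\<Sum>i\<le>degree p. scale (coeff p i) (phi ((phi ^^ i) v)))"
    by (simp add: sum.atMost_Suc_shift del: sum.atMost_Suc)
  also have "(\<Sum>i\<le>degree p. scale (coeff p i) (phi ((phi ^^ i) v))) = phi (poly_endo scale p phi v)"
    by (simp add: poly_endo_def module_hom.sum[OF mh] module_hom.scale[OF mh])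
  finally show ?thesis .
qed

lemma pe_mult:
  assumes lin: "Vector_Spaces.linear scale scale phi"
  shows "poly_endo scale (p * q) phi v = poly_endo scale p phi (poly_endo scale q phi v)"
proof (induction p)
  case 0
  then show ?case by simp
next
  case (pCons a p)
  then show ?case by (simp add: pe_add pe_smult pe_pCons[OF lin])
qed

lemma pe_1: "poly_endo scale 1 phi v = v"
  by (simp add: poly_endo_def)

lemma pe_x:
  assumes lin: "Vector_Spaces.linear scale scale phi"
  shows "poly_endo scale [:0,1:] phi v = phi v"
  using module_hom.zero[OF module_hom_linearI[OF lin]]
  by (simp add: pe_pCons[OF lin] pe_1[unfolded one_pCons])

lemma pe_xpow:
  assumes lin: "Vector_Spaces.linear scale scale phi"
  shows "poly_endo scale ([:0,1:] ^ k) phi v = (phi ^^ k) v"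
  by (induction k arbitrary: v) (simp_all only: power_0 power_Suc pe_1 pe_mult[OF lin] pe_x[OF lin] funpow.simps o_apply id_apply)

lemma pe_lin:
  assumes lin: "Vector_Spaces.linear scale scale phi"
  shows "poly_endo scale p phi (x + y) = poly_endo scale p phi x + poly_endo scale p phi y"
    and "poly_endo scale p phi (scale c x) = scale c (poly_endo scale p phi x)"
proof -
  have mh: "module_hom scale scale phi" using lin by (rule module_hom_linearI)
  show "poly_endo scale p phi (x + y) = poly_endo scale p phi x + poly_endo scale p phi y"
    by (induction p) (simp_all add: pe_pCons[OF lin] module_hom.add[OF mh] scale_right_distrib algebra_simps)
  show "poly_endo scale p phi (scale c x) = scale c (poly_endo scale p phi x)"
    by (induction p) (simp_all add: pe_pCons[OF lin] module_hom.add[OF mh] module_hom.scale[OF mh] scale_right_distrib mult.commute)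
qed

lemma pe_zero:
  assumes lin: "Vector_Spaces.linear scale scale phi"
  shows "poly_endo scale p phi 0 = 0"
  using pe_lin(2)[OF lin, of p 0 0] by simp

lemma pe_vdiff:
  assumes lin: "Vector_Spaces.linear scale scale phi"
  shows "poly_endo scale p phi (x - y) = poly_endo scale p phi x - poly_endo scale p phi y"
proof -
  have "x - y = x + scale (-1) y" by (simp add: scale_minus_left)
  then have "poly_endo scale p phi (x - y) = poly_endo scale p phi x + scale (-1) (poly_endo scale p phi y)"
    using pe_lin[OF lin] by metis
  then show ?thesis by (simp add: scale_minus_left)
qed


lemma xpow_monom: "([:0,1:] :: 'a poly) ^ i = monom 1 i"
  by (simp add: monom_altdef)

lemma funpow_zero:
  assumes lin: "Vector_Spaces.linear scale scale phi"
  shows "(phi ^^ k) 0 = 0"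
  using pe_zero[OF lin, of "[:0,1:]^k"] pe_xpow[OF lin] by simp

lemma x_dvd_iff: "([:0,1:] :: 'c::field poly) dvd g \<longleftrightarrow> coeff g 0 = 0"
  using dvd_iff_poly_eq_0[of 0 g] by (simp add: poly_0_coeff_0)

lemma bez_x0:
  fixes g :: "'c::field poly"
  assumes "coeff g 0 \<noteq> 0"
  shows "\<exists>a b. a * g + b * [:0,1:] ^ m = 1"
proof (induction m)
  case 0
  show ?case by (intro exI[of _ 0] exI[of _ 1]) simp
next
  case (Suc m)
  then obtain a b where ab: "a * g + b * [:0,1:] ^ m = 1" by blast
  obtain c h where gch: "g = pCons c h" by (cases g)
  obtain b0 b' where bb: "b = pCons b0 b'" by (cases b)
  have c: "c \<noteq> 0" using assms gch by simp
  define X where "X = ([:0,1:] :: 'c poly)"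
  define K where "K = [:b0 / c:]"
  have g_eq: "g = [:c:] + X * h" unfolding gch X_def by simp
  have b_eq: "b = [:b0:] + X * b'" unfolding bb X_def by simp
  have KC: "K * [:c:] = [:b0:]" unfolding K_def using c by simp
  have "(a + K * X ^ m) * g + (b' - K * h) * X ^ Suc m = a * g + (K * [:c:]) * X ^ m + b' * X ^ Suc m"
    unfolding g_eq power_Suc by algebra
  also have "\<dots> = a * g + b * X ^ m"
    unfolding KC b_eq power_Suc by algebra
  finally have "(a + K * X ^ m) * g + (b' - K * h) * X ^ Suc m = 1" using ab unfolding X_def by simp
  then show ?case unfolding X_def by blast
qed

lemma cop_coeff:
  assumes "coprime g ([:0,1:] :: 'c::field poly)"
  shows "coeff g 0 \<noteq> 0"
proof
  assume "coeff g 0 = 0"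
  then have "[:0,1:] dvd g" by (simp add: x_dvd_iff)
  then have u: "is_unit ([:0,1:] :: 'c poly)" using coprime_common_divisor[OF assms _ dvd_refl] by blast
  have "degree ([:0,1:] :: 'c poly) = 0" using is_unit_iff_degree[of "[:0,1:] :: 'c poly"] u by simp
  then show False by simp
qed

lemma coeff_cop:
  assumes "coeff g 0 \<noteq> 0"
  shows "coprime g ([:0,1:] :: 'c::field poly)"
proof (rule coprimeI)
  fix d assume d: "d dvd g" "d dvd [:0,1:]"
  obtain a b where "a * g + b * [:0,1:] ^ 1 = 1" using bez_x0[OF assms] by blast
  moreover have "d dvd a * g + b * [:0,1:] ^ 1" unfolding power_one_right
    using d by (intro dvd_add dvd_mult)
  ultimately show "is_unit d" by metis
qed

lemma bez_x:
  assumes "coprime g ([:0,1:] :: 'a poly)"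
  shows "\<exists>a b. a * g + b * [:0,1:] ^ m = 1"
  using bez_x0[OF cop_coeff[OF assms]] .

lemma W_zero:
  assumes lin: "Vector_Spaces.linear scale scale phi"
    and w: "w \<in> W_part scale phi" and m: "(phi ^^ m) w = 0"
  shows "w = 0"
proof -
  obtain g where g: "coprime g [:0,1:]" "poly_endo scale g phi w = 0"
    using w unfolding W_part_def by blast
  obtain a b where ab: "a * g + b * [:0,1:] ^ m = 1" using bez_x[OF g(1)] by blast
  have "w = poly_endo scale (a * g + b * [:0,1:] ^ m) phi w" by (simp add: ab pe_1)
  also have "\<dots> = 0"
    by (simp add: pe_add pe_mult[OF lin] g(2) pe_xpow[OF lin] m pe_zero[OF lin])
  finally show ?thesis .
qed

lemma W_range:
  assumes lin: "Vector_Spaces.linear scale scale phi"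
    and w: "w \<in> W_part scale phi"
  shows "w \<in> range (phi ^^ r)"
proof -
  obtain g where g: "coprime g [:0,1:]" "poly_endo scale g phi w = 0"
    using w unfolding W_part_def by blast
  obtain a b where ab: "a * g + b * [:0,1:] ^ r = 1" using bez_x[OF g(1)] by blast
  have "w = poly_endo scale (a * g + [:0,1:] ^ r * b) phi w" by (simp add: ab pe_1 mult.commute)
  also have "\<dots> = (phi ^^ r) (poly_endo scale b phi w)"
    by (simp add: pe_add pe_mult[OF lin] g(2) pe_xpow[OF lin] pe_zero[OF lin])
  finally show ?thesis by blast
qed

lemma decomp:
  assumes lin: "Vector_Spaces.linear scale scale phi"
    and F: "F \<noteq> 0" "poly_endo scale F phi v = 0"
  shows "\<exists>w u. v = w + u \<and> w \<in> W_part scale phi \<and> (phi ^^ degree F) u = 0"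
proof -
  define j where "j = order 0 F"
  obtain g where g: "F = [:0,1:] ^ j * g" "\<not> [:0,1:] dvd g"
    using order_decomp[OF F(1), of 0] unfolding j_def by auto
  have jle: "j \<le> degree F" unfolding j_def by (rule order_degree[OF F(1)])
  have cop: "coprime g [:0,1:]"
    using g(2) by (intro coeff_cop) (simp add: x_dvd_iff)
  obtain a b where ab: "a * g + b * [:0,1:] ^ j = 1" using bez_x[OF cop] by blast
  define u where "u = poly_endo scale (a * g) phi v"
  define w where "w = poly_endo scale (b * [:0,1:] ^ j) phi v"
  have "v = poly_endo scale (a * g + b * [:0,1:] ^ j) phi v" by (simp add: ab pe_1)
  then have vwu: "v = w + u" unfolding u_def w_def by (simp add: pe_add add.commute)
  have "poly_endo scale g phi w = poly_endo scale (b * F) phi v"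
    unfolding w_def pe_mult[OF lin, symmetric] by (simp add: g(1) ac_simps)
  then have "poly_endo scale g phi w = 0" by (simp add: pe_mult[OF lin] F(2) pe_zero[OF lin])
  with cop have wW: "w \<in> W_part scale phi" unfolding W_part_def by blast
  have "(phi ^^ j) u = poly_endo scale ([:0,1:] ^ j) phi u" by (simp add: pe_xpow[OF lin])
  also have "\<dots> = poly_endo scale (a * F) phi v"
    unfolding u_def pe_mult[OF lin, symmetric] by (simp add: g(1) ac_simps)
  also have "\<dots> = 0" by (simp add: pe_mult[OF lin] F(2) pe_zero[OF lin])
  finally have uj: "(phi ^^ j) u = 0" .
  define e where "e = degree F - j"
  have "degree F = e + j" using jle unfolding e_def by simp
  then have "(phi ^^ degree F) u = 0" using uj funpow_zero[OF lin] by (simp add: funpow_add)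
  then show ?thesis using vwu wW by blast
qed

lemma annihil:
  assumes lin: "Vector_Spaces.linear scale scale phi"
    and B: "finite B" and y: "\<forall>i. (phi ^^ i) y \<in> span B"
  shows "\<exists>f. f \<noteq> 0 \<and> degree f \<le> card B \<and> poly_endo scale f phi y = 0"
proof -
  define d where "d = card B"
  define S where "S = (\<lambda>i. (phi ^^ i) y) ` {..d}"
  show ?thesis
  proof (cases "inj_on (\<lambda>i. (phi ^^ i) y) {..d}")
    case False
    then obtain i0 j0 where ij0: "i0 \<le> d" "j0 \<le> d" "i0 \<noteq> j0" "(phi ^^ i0) y = (phi ^^ j0) y"
      unfolding inj_on_def by auto
    have key: "\<exists>f. f \<noteq> 0 \<and> degree f \<le> card B \<and> poly_endo scale f phi y = 0"
      if ij: "i \<le> d" "j \<le> d" "i < j" "(phi ^^ i) y = (phi ^^ j) y" for i j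
    proof -
      define f where "f = ([:0,1:] :: 'a poly) ^ j - [:0,1:] ^ i"
      have "coeff f j = 1" using ij(3) unfolding f_def xpow_monom by simp
      then have f0: "f \<noteq> 0" by auto
      have fd: "degree f \<le> d"
        unfolding f_def xpow_monom using ij(1,2)
        by (intro degree_diff_le) (auto simp: degree_monom_eq)
      have fy: "poly_endo scale f phi y = 0"
        unfolding f_def by (simp add: pe_diff pe_xpow[OF lin] ij(4))
      show ?thesis using f0 fd fy unfolding d_def by (intro exI[of _ f]) simp
    qed
    show ?thesis
    proof (cases "i0 < j0")
      case True
      show ?thesis using key[OF ij0(1,2) True ij0(4)] by simp
    next
      case False
      then have "j0 < i0" using ij0(3) by simp
      then show ?thesis using key[OF ij0(2,1) _ ij0(4)[symmetric]] by simp
    qed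
  next
    case True
    have cS: "card S = Suc d" unfolding S_def using card_image[OF True] by simp
    have SB: "S \<subseteq> span B" unfolding S_def using y by auto
    have "dependent S"
    proof (rule ccontr)
      assume "independent S"
      then have "card S \<le> card B" using independent_span_bound[OF B _ SB] by blast
      then show False using cS unfolding d_def by simp
    qed
    then obtain T u where T: "finite T" "T \<subseteq> S" "(\<Sum>v\<in>T. scale (u v) v) = 0" "\<exists>v\<in>T. u v \<noteq> 0"
      unfolding dependent_explicit by blast
    define P where "P i \<longleftrightarrow> (phi ^^ i) y \<in> T" for i
    define c where "c i = (if P i then u ((phi ^^ i) y) else 0)" for i
    define f where "f = (\<Sum>i\<le>d. smult (c i) (([:0,1:] :: 'a poly) ^ i))"
    have cf: "coeff f k = (if k \<le> d then c k else 0)" for k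
      unfolding f_def xpow_monom by (simp add: coeff_sum smult_monom)
    obtain v where v: "v \<in> T" "u v \<noteq> 0" using T(4) by blast
    then obtain i where i: "i \<le> d" "v = (phi ^^ i) y" using T(2) unfolding S_def by auto
    have "coeff f i \<noteq> 0" using v i cf unfolding c_def P_def by simp
    then have "f \<noteq> 0" by auto
    moreover have "degree f \<le> d" by (rule degree_le) (simp add: cf)
    moreover have "poly_endo scale f phi y = 0"
    proof -
      have "poly_endo scale f phi y = (\<Sum>i\<le>d. scale (c i) ((phi ^^ i) y))"
        unfolding f_def by (simp add: pe_sum pe_smult pe_xpow[OF lin])
      also have "\<dots> = (\<Sum>i\<le>d. if P i then scale (u ((phi ^^ i) y)) ((phi ^^ i) y) else 0)"
        unfolding c_def by (rule sum.cong) auto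
      also have "\<dots> = (\<Sum>i\<in>{i\<in>{..d}. P i}. scale (u ((phi ^^ i) y)) ((phi ^^ i) y))"
        by (rule sum.inter_filter[symmetric]) simp
      also have "\<dots> = (\<Sum>v\<in>(\<lambda>i. (phi ^^ i) y) ` {i\<in>{..d}. P i}. scale (u v) v)"
        by (rule sum.reindex[symmetric, unfolded o_def]) (rule inj_on_subset[OF True], auto)
      also have "(\<lambda>i. (phi ^^ i) y) ` {i\<in>{..d}. P i} = T"
        using T(2) unfolding S_def P_def by auto
      finally show ?thesis using T(3) by simp
    qed
    ultimately show ?thesis unfolding d_def by blast
  qed
qed

end

theorem corollary3p3:
  fixes scale :: "'k::field \<Rightarrow> 'v::ab_group_add \<Rightarrow> 'v"
    and phi psi :: "'v \<Rightarrow> 'v"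
  assumes "vector_space scale"
    and "finite_potent scale phi"
    and "G_Drazin_inverse scale phi psi"
  shows "psi ` W_part scale phi \<subseteq> W_part scale phi \<and> psi ` U_part phi \<subseteq> U_part phi"
proof -
  interpret vector_space scale by fact
  from assms(2) obtain n B where lin: "Vector_Spaces.linear scale scale phi"
    and B: "finite B" "span B = range (phi ^^ n)"
    unfolding finite_potent_def by blast
  have linpsi: "Vector_Spaces.linear scale scale psi"
    and comm: "psi \<circ> (phi ^^ fp_index phi) = (phi ^^ fp_index phi) \<circ> psi"
    using assms(3) unfolding G_Drazin_inverse_def by auto
  have psi0: "psi 0 = 0" using module_hom.zero[OF module_hom_linearI[OF linpsi]] .
  have psidiff: "psi (x - y) = psi x - psi y" for x y
    using module_hom.diff[OF module_hom_linearI[OF linpsi]] .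
  define d where "d = card B"
  define N where "N = n + d"
  have ann: "\<exists>F. F \<noteq> 0 \<and> degree F \<le> N \<and> poly_endo scale F phi v = 0" for v
  proof -
    define y where "y = (phi ^^ n) v"
    have "\<forall>i. (phi ^^ i) y \<in> span B"
    proof
      fix i
      have "(phi ^^ i) y = (phi ^^ (i + n)) v" unfolding y_def by (simp add: funpow_add)
      also have "\<dots> = (phi ^^ (n + i)) v" by (simp add: add.commute)
      also have "\<dots> = (phi ^^ n) ((phi ^^ i) v)" by (simp add: funpow_add)
      finally have "(phi ^^ i) y = (phi ^^ n) ((phi ^^ i) v)" .
      then show "(phi ^^ i) y \<in> span B" using B(2) by simp
    qed
    then obtain f where f: "f \<noteq> 0" "degree f \<le> d" "poly_endo scale f phi y = 0"
      using annihil[OF lin B(1)] unfolding d_def by blast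
    define F where "F = f * [:0,1:] ^ n"
    have "F \<noteq> 0" unfolding F_def using f(1) by simp
    moreover have "degree F \<le> N"
    proof -
      have "degree F \<le> degree f + degree (([:0,1:] :: 'k poly) ^ n)" unfolding F_def by (rule degree_mult_le)
      also have "degree (([:0,1:] :: 'k poly) ^ n) \<le> n" using degree_power_le[of "[:0,1:]" n] by simp
      finally show ?thesis unfolding N_def using f(2) by simp
    qed
    moreover have "poly_endo scale F phi v = 0"
      unfolding F_def by (simp add: pe_mult[OF lin] pe_xpow[OF lin] y_def[symmetric] f(3))
    ultimately show ?thesis by blast
  qed
  have phidiff: "(phi ^^ k) (x - y) = (phi ^^ k) x - (phi ^^ k) y" for k x y
    using pe_vdiff[OF lin, of "[:0,1:]^k"] by (simp add: pe_xpow[OF lin])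
  have mono0: "(phi ^^ k) u = 0 \<Longrightarrow> k \<le> K \<Longrightarrow> (phi ^^ K) u = 0" for k K u
  proof -
    assume a: "(phi ^^ k) u = 0" "k \<le> K"
    define e where "e = K - k"
    have "K = e + k" using a(2) unfolding e_def by simp
    then show "(phi ^^ K) u = 0" using a(1) funpow_zero[OF lin] by (simp add: funpow_add)
  qed
  have dec: "\<exists>w u D. v = w + u \<and> w \<in> W_part scale phi \<and> (phi ^^ D) u = 0 \<and> D \<le> N" for v
  proof -
    obtain F where F: "F \<noteq> 0" "degree F \<le> N" "poly_endo scale F phi v = 0" using ann by blast
    then show ?thesis using decomp[OF lin F(1) F(3)] by blast
  qed
  have HN: "\<forall>u\<in>U_part phi. (phi ^^ N) u = 0"
  proof
    fix u assume "u \<in> U_part phi"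
    then obtain m where m: "(phi ^^ m) u = 0" unfolding U_part_def by blast
    obtain w u' D where wu: "u = w + u'" "w \<in> W_part scale phi" "(phi ^^ D) u' = 0" "D \<le> N"
      using dec by blast
    have "(phi ^^ (m + N)) w = (phi ^^ (m + N)) u - (phi ^^ (m + N)) u'"
      using wu(1) phidiff by (metis add_diff_cancel_right')
    also have "\<dots> = 0" using mono0[OF m, of "m+N"] mono0[OF wu(3), of "m+N"] wu(4) by simp
    finally have "w = 0" using W_zero[OF lin wu(2)] by blast
    then show "(phi ^^ N) u = 0" using wu mono0 by simp
  qed
  define r where "r = fp_index phi"
  have R: "\<forall>u\<in>U_part phi. (phi ^^ r) u = 0"
    unfolding r_def fp_index_def by (rule LeastI[of _ N]) (rule HN)
  have comm': "psi ((phi ^^ r) x) = (phi ^^ r) (psi x)" for x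
    using fun_cong[OF comm, of x] unfolding r_def by simp
  have Uinv: "psi ` U_part phi \<subseteq> U_part phi"
  proof
    fix z assume "z \<in> psi ` U_part phi"
    then obtain u where u: "u \<in> U_part phi" "z = psi u" by blast
    have "(phi ^^ r) z = 0" using u comm'[of u] R psi0 by simp
    then show "z \<in> U_part phi" unfolding U_part_def by blast
  qed
  have Winv: "psi ` W_part scale phi \<subseteq> W_part scale phi"
  proof
    fix z assume "z \<in> psi ` W_part scale phi"
    then obtain w where w: "w \<in> W_part scale phi" "z = psi w" by blast
    obtain y where y: "w = (phi ^^ r) y" using W_range[OF lin w(1)] by blast
    have z: "z = (phi ^^ r) (psi y)" using w(2) y comm' by simp
    obtain w' u' D where wu: "z = w' + u'" "w' \<in> W_part scale phi" "(phi ^^ D) u' = 0"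
      using dec by blast
    obtain y' where y': "w' = (phi ^^ r) y'" using W_range[OF lin wu(2)] by blast
    have u': "u' = (phi ^^ r) (psi y - y')" using wu(1) z y' phidiff by simp
    have "(phi ^^ (D + r)) (psi y - y') = 0" using wu(3) u' by (simp add: funpow_add)
    then have "psi y - y' \<in> U_part phi" unfolding U_part_def by blast
    then have "u' = 0" using u' R by simp
    then show "z \<in> W_part scale phi" using wu by simp
  qed
  show ?thesis using Uinv Winv by blast
qed

end
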